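(* Let $p\in[2,+\infty]$ and let $U\in C^3([0,1])$ satisfy $U(1)=0$, $\max_{[0,1]}U''<0$, $U'(0)=0$, $U'(1)=-1$. There exist $\mu_0>0$ and $C>0$ such that for all $\lambda=\mu+i\nu$ with $\nu>U(0)$ and $|\mu|<\mu_0$, all $\alpha\ge0$, and all $(\phi,v)\in D(\mathcal A_{\lambda,\alpha})\times L^\infty(0,1)$ with $\mathcal A_{\lambda,\alpha}\phi=v$, $$\|\phi\|_{1,2}\le\frac{C}{\big[|\mu|+|\nu-U(0)|\big]^{\frac{1}{2p}+\frac14}}\|v\|_p .$$
   Context: $\mathcal A_{\lambda,\alpha}=(U+i\lambda)\big(-\frac{d^2}{dx^2}+\alpha^2\big)+U''$ on $(0,1)$, $D(\mathcal A_{\lambda,\alpha})=\{\phi\in H^2(0,1):\phi'(0)=0,\ \phi(1)=0\}$. $\|\cdot\|_p$ and $\|\cdot\|_{1,2}$ are the norms of $L^p(0,1)$ and $H^1(0,1)$. *)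

theory Defs
  imports "HOL-Analysis.Analysis" "HOL-Probability.Essential_Supremum"
begin

definition C3_on_01 :: "(real \<Rightarrow> real) \<Rightarrow> (real \<Rightarrow> real) \<Rightarrow> (real \<Rightarrow> real) \<Rightarrow> (real \<Rightarrow> real) \<Rightarrow> bool" where
  "C3_on_01 U U1 U2 U3 \<longleftrightarrow>
     (\<forall>x\<in>{0..1}. (U has_real_derivative U1 x) (at x within {0..1})
               \<and> (U1 has_real_derivative U2 x) (at x within {0..1})
               \<and> (U2 has_real_derivative U3 x) (at x within {0..1}))
     \<and> continuous_on {0..1} U3"

text \<open>phi is (the continuous representative of) an element of H^2(0,1) with weak derivatives
phi1 (continuous) and phi2 in L^2(0,1).\<close>
definition H2_01 :: "(real \<Rightarrow> complex) \<Rightarrow> (real \<Rightarrow> complex) \<Rightarrow> (real \<Rightarrow> complex) \<Rightarrow> bool" where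
  "H2_01 phi phi1 phi2 \<longleftrightarrow>
     phi2 absolutely_integrable_on {0..1}
     \<and> (\<lambda>x. (cmod (phi2 x))\<^sup>2) integrable_on {0..1}
     \<and> (\<forall>x\<in>{0..1}. phi1 x = phi1 0 + integral {0..x} phi2)
     \<and> (\<forall>x\<in>{0..1}. phi x = phi 0 + integral {0..x} phi1)"

definition dom_A :: "(real \<Rightarrow> complex) \<Rightarrow> (real \<Rightarrow> complex) \<Rightarrow> (real \<Rightarrow> complex) \<Rightarrow> bool" where
  "dom_A phi phi1 phi2 \<longleftrightarrow> H2_01 phi phi1 phi2 \<and> phi1 0 = 0 \<and> phi 1 = 0"

definition Linf_01 :: "(real \<Rightarrow> complex) \<Rightarrow> bool" where
  "Linf_01 v \<longleftrightarrow> v \<in> borel_measurable (lebesgue_on {0..1})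
     \<and> (\<exists>B. AE x in lebesgue_on {0..1}. cmod (v x) \<le> B)"

definition Lp_norm :: "ereal \<Rightarrow> (real \<Rightarrow> complex) \<Rightarrow> real" where
  "Lp_norm p f = (if p = \<infinity>
      then real_of_ereal (esssup (lebesgue_on {0..1}) (\<lambda>x. ereal (cmod (f x))))
      else (integral {0..1} (\<lambda>x. cmod (f x) powr real_of_ereal p)) powr (1 / real_of_ereal p))"

definition H1_norm :: "(real \<Rightarrow> complex) \<Rightarrow> (real \<Rightarrow> complex) \<Rightarrow> real" where
  "H1_norm phi phi1 = sqrt (integral {0..1} (\<lambda>x. (cmod (phi x))\<^sup>2 + (cmod (phi1 x))\<^sup>2))"

definition A_eq :: "(real \<Rightarrow> real) \<Rightarrow> (real \<Rightarrow> real) \<Rightarrow> complex \<Rightarrow> real \<Rightarrow>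
    (real \<Rightarrow> complex) \<Rightarrow> (real \<Rightarrow> complex) \<Rightarrow> (real \<Rightarrow> complex) \<Rightarrow> bool" where
  "A_eq U U2 lam alpha phi phi2 v \<longleftrightarrow>
     (AE x in lebesgue_on {0..1}.
        (complex_of_real (U x) + \<i> * lam) * (- phi2 x + complex_of_real (alpha\<^sup>2) * phi x)
        + complex_of_real (U2 x) * phi x = v x)"

end

theory Submission
  imports Defs
begin


lemma ibp_borel:
  fixes g h :: "real \<Rightarrow> complex"
  assumes gm[measurable]: "g \<in> borel_measurable borel" and hm[measurable]: "h \<in> borel_measurable borel"
  and gi: "set_integrable lborel {0..1} g" and hb: "\<And>t. norm (h t) \<le> B"
  shows "integral {0..1} (\<lambda>x. g x * integral {x..1} h) = integral {0..1} (\<lambda>t. h t * integral {0..t} g)"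
proof -
  define F where "F x t = (if 0 \<le> x \<and> x \<le> t \<and> t \<le> (1::real) then g x * h t else 0)" for x t
  have B0: "0 \<le> B" using hb[of 0] norm_ge_zero order_trans by blast
  define D where "D = (\<lambda>(x::real,t::real). (indicator {0..1} x * norm (g x)) * (B * indicator {0..1} t :: real))"
  have gn: "integrable lborel (\<lambda>x. indicator {0..1} x * norm (g x))"
    using integrable_norm[OF gi[unfolded set_integrable_def]] by (simp add: abs_mult)
  have Dint: "integrable (lborel \<Otimes>\<^sub>M lborel) D"
  proof (rule lborel_pair.Fubini_integrable)
    show "D \<in> borel_measurable (lborel \<Otimes>\<^sub>M lborel)" unfolding D_def by measurable
    have "(\<integral>y. norm (D (x, y)) \<partial>lborel) = (indicator {0..1} x * norm (g x)) * B" for x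
    proof -
      have e: "(\<lambda>y. norm (D (x, y))) = (\<lambda>y. (indicator {0..1} x * norm (g x) * B) * indicator {0..1} y)"
        unfolding D_def using B0 by (auto simp: abs_mult indicator_def)
      have "(\<integral>y. (indicator {0..1} x * norm (g x) * B) * indicator {0..1} (y::real) \<partial>lborel) = indicator {0..1} x * norm (g x) * B"
        by simp
      then show ?thesis unfolding e .
    qed
    then show "integrable lborel (\<lambda>x. \<integral>y. norm (D (x, y)) \<partial>lborel)"
      using gn by simp
    show "AE x in lborel. integrable lborel (\<lambda>y. D (x, y))"
      unfolding D_def by (auto intro!: integrable_mult_right)
  qed
  have Fint: "integrable (lborel \<Otimes>\<^sub>M lborel) (case_prod F)"
  proof (rule Bochner_Integration.integrable_bound[OF Dint])
    show "case_prod F \<in> borel_measurable (lborel \<Otimes>\<^sub>M lborel)" unfolding F_def by measurable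
    show "AE x in lborel \<Otimes>\<^sub>M lborel. norm (case_prod F x) \<le> norm (D x)"
    proof (rule AE_I2, clarify)
      fix x t :: real
      show "norm (F x t) \<le> norm (D (x,t))"
        unfolding F_def D_def using hb[of t] B0 mult_left_mono[of "cmod (h t)" B "cmod (g x)"]
        by (auto simp: indicator_def norm_mult mult.commute)
    qed
  qed
  have "(\<integral>t. (\<integral>x. F x t \<partial>lborel) \<partial>lborel) = (\<integral>x. (\<integral>t. F x t \<partial>lborel) \<partial>lborel)"
    by (rule lborel_pair.Fubini_integral[OF Fint])
  have hi: "set_integrable lborel {a..b} h" for a b :: real
    unfolding set_integrable_def
    by (rule integrableI_bounded_set_indicator[where B=B]) (use hb in \<open>auto simp: emeasure_lborel_Icc_eq\<close>)
  have gi2: "set_integrable lborel {0..t} g" if "t \<le> 1" for t :: real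
    by (rule set_integrable_subset[OF gi]) (use that in auto)
  have inner1: "(\<integral>t. F x t \<partial>lborel) = indicator {0..1} x *\<^sub>R (g x * integral {x..1} h)" for x
  proof (cases "0 \<le> x \<and> x \<le> 1")
    case True
    have "(\<lambda>t. F x t) = (\<lambda>t. g x * (indicator {x..1} t *\<^sub>R h t))"
      using True unfolding F_def by (auto simp: indicator_def fun_eq_iff)
    then have "(\<integral>t. F x t \<partial>lborel) = g x * (LINT t:{x..1}|lborel. h t)"
      unfolding set_lebesgue_integral_def by (simp only: integral_mult_right_zero)
    also have "\<dots> = g x * integral {x..1} h"
      using set_borel_integral_eq_integral(2)[OF hi] by simp
    finally show ?thesis using True by simp
  next
    case False
    then have "(\<lambda>t. F x t) = (\<lambda>t. 0)" unfolding F_def by (auto simp: fun_eq_iff)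
    then show ?thesis using False by simp
  qed
  have inner2: "(\<integral>x. F x t \<partial>lborel) = indicator {0..1} t *\<^sub>R (h t * integral {0..t} g)" for t
  proof (cases "0 \<le> t \<and> t \<le> 1")
    case True
    have "(\<lambda>x. F x t) = (\<lambda>x. h t * (indicator {0..t} x *\<^sub>R g x))"
      using True unfolding F_def by (auto simp: indicator_def fun_eq_iff)
    then have "(\<integral>x. F x t \<partial>lborel) = h t * (LINT x:{0..t}|lborel. g x)"
      unfolding set_lebesgue_integral_def by (simp only: integral_mult_right_zero)
    also have "\<dots> = h t * integral {0..t} g"
      using set_borel_integral_eq_integral(2)[OF gi2] True by simp
    finally show ?thesis using True by simp
  next
    case False
    then have "(\<lambda>x. F x t) = (\<lambda>x. 0)" unfolding F_def by (auto simp: fun_eq_iff)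
    then show ?thesis using False by simp
  qed
  have I1: "set_integrable lborel {0..1} (\<lambda>x. g x * integral {x..1} h)"
    using lborel_pair.integrable_fst'[OF Fint] unfolding set_integrable_def
    by (simp add: inner1)
  have I2: "set_integrable lborel {0..1} (\<lambda>t. h t * integral {0..t} g)"
    using lborel_pair.integrable_fst'[OF lborel_pair.integrable_product_swap[OF Fint]] unfolding set_integrable_def
    by (simp add: inner2)
  have "(\<integral>t. (\<integral>x. F x t \<partial>lborel) \<partial>lborel) = (\<integral>x. (\<integral>t. F x t \<partial>lborel) \<partial>lborel)"
    by (rule lborel_pair.Fubini_integral[OF Fint])
  then have "(LINT t:{0..1}|lborel. h t * integral {0..t} g) = (LINT x:{0..1}|lborel. g x * integral {x..1} h)"
    by (simp add: inner1 inner2 set_lebesgue_integral_def)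
  then show ?thesis
    using set_borel_integral_eq_integral(2)[OF I1] set_borel_integral_eq_integral(2)[OF I2] by simp
qed

lemma ibp:
  fixes f h :: "real \<Rightarrow> complex"
  assumes f: "f absolutely_integrable_on {0..1}" and h: "continuous_on {0..1} h"
  shows "integral {0..1} (\<lambda>x. f x * integral {x..1} h) = integral {0..1} (\<lambda>t. h t * integral {0..t} f)"
proof -
  define F0 where "F0 x = indicator {0..1} x *\<^sub>R f x" for x
  have F0i: "integrable lebesgue F0" using f unfolding set_integrable_def F0_def .
  then have F0m: "F0 \<in> borel_measurable lebesgue" by auto
  obtain gr where gr: "gr \<in> borel_measurable lborel" "AE x in lborel. Re (F0 x) = gr x"
    using completion_ex_borel_measurable_real[of "\<lambda>x. Re (F0 x)" lborel] F0m by auto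
  obtain gi where gi: "gi \<in> borel_measurable lborel" "AE x in lborel. Im (F0 x) = gi x"
    using completion_ex_borel_measurable_real[of "\<lambda>x. Im (F0 x)" lborel] F0m by auto
  define g0 where "g0 x = complex_of_real (gr x) + \<i> * complex_of_real (gi x)" for x
  have g0m: "g0 \<in> borel_measurable borel" unfolding g0_def using gr(1) gi(1) by simp
  have ae: "AE x in lborel. F0 x = g0 x"
    using gr(2) gi(2) by eventually_elim (simp add: g0_def complex_eq_iff)
  define g where "g x = indicator {0..1} x *\<^sub>R g0 x" for x
  have gm[measurable]: "g \<in> borel_measurable borel" unfolding g_def using g0m by simp
  have aeg: "AE x in lborel. F0 x = g x"
    using ae by eventually_elim (auto simp: g_def F0_def indicator_def)
  obtain N where N: "{x \<in> space lborel. \<not> F0 x = g x} \<subseteq> N" "emeasure lborel N = 0" "N \<in> sets lborel"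
    using aeg by (rule AE_E)
  have negN: "negligible N"
    using N(2,3) negligible_iff_null_sets[of N] null_sets_completionI[of N lborel] by auto
  have fg: "f x = g x" if "x \<in> {0..1}" "x \<notin> N" for x
  proof -
    have "F0 x = g x" using N(1) that by auto
    then show ?thesis using that unfolding F0_def by simp
  qed
  have gint: "set_integrable lborel {0..1} g"
  proof -
    have gl: "g \<in> borel_measurable lebesgue" using gm by (intro measurable_completion) simp
    have "integrable lebesgue g"
      using F0i by (rule integrable_cong_AE_imp) (use aeg AE_completion gl in auto)
    then have "integrable lborel g"
      using integrable_completion[of g lborel] by simp
    moreover have "(\<lambda>x. indicator {0..1} x *\<^sub>R g x) = g"
      unfolding g_def by (auto simp: indicator_def fun_eq_iff)
    ultimately show ?thesis unfolding set_integrable_def by simp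
  qed
  define h' where "h' t = h (max 0 (min 1 t))" for t
  have h'c: "continuous_on UNIV h'" unfolding h'_def
    by (rule continuous_on_compose2[OF h]) (auto intro!: continuous_intros)
  have h'm: "h' \<in> borel_measurable borel" using h'c by (simp add: borel_measurable_continuous_onI)
  have hh': "h t = h' t" if "t \<in> {0..1}" for t using that unfolding h'_def by auto
  obtain B where B: "\<And>t. t \<in> {0..1} \<Longrightarrow> norm (h t) \<le> B"
    using compact_imp_bounded[OF compact_continuous_image[OF h compact_Icc]] unfolding bounded_iff by force
  have h'B: "norm (h' t) \<le> B" for t unfolding h'_def by (rule B) auto
  have *: "integral {0..1} (\<lambda>x. g x * integral {x..1} h') = integral {0..1} (\<lambda>t. h' t * integral {0..t} g)"
    by (rule ibp_borel[OF gm h'm gint h'B])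
  have "integral {0..1} (\<lambda>x. f x * integral {x..1} h) = integral {0..1} (\<lambda>x. g x * integral {x..1} h')"
  proof (rule integral_spike[OF negN])
    fix x assume "x \<in> {0..1} - N"
    moreover have "integral {x..1} h = integral {x..1} h'" if "x \<in> {0..1}"
      using that by (intro integral_cong) (auto intro!: hh')
    ultimately show "g x * integral {x..1} h' = f x * integral {x..1} h" using fg by auto
  qed
  also have "\<dots> = integral {0..1} (\<lambda>t. h' t * integral {0..t} g)" by (rule *)
  also have "\<dots> = integral {0..1} (\<lambda>t. h t * integral {0..t} f)"
  proof (rule integral_cong)
    fix t :: real assume t: "t \<in> {0..1}"
    have "integral {0..t} f = integral {0..t} g"
      by (rule integral_spike[OF negN]) (use t fg in auto)
    then show "h' t * integral {0..t} g = h t * integral {0..t} f" using hh'[OF t] by simp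
  qed
  finally show ?thesis .
qed

lemma integral_of_real_HK:
  fixes f :: "real \<Rightarrow> real"
  assumes "f integrable_on S"
  shows "integral S (\<lambda>x. complex_of_real (f x)) = complex_of_real (integral S f)"
  using has_integral_of_real[OF integrable_integral[OF assms], where 'b=complex] by (rule integral_unique)

lemma dom_basic:
  assumes "dom_A phi phi1 phi2"
  shows "continuous_on {0..1} phi1" "continuous_on {0..1} phi"
    "\<And>x. x \<in> {0..1} \<Longrightarrow> phi1 x = integral {0..x} phi2"
    "\<And>x. x \<in> {0..1} \<Longrightarrow> phi x = - integral {x..1} phi1"
    "phi2 absolutely_integrable_on {0..1}"
proof -
  have H: "phi2 absolutely_integrable_on {0..1}" "\<forall>x\<in>{0..1}. phi1 x = phi1 0 + integral {0..x} phi2"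
    "\<forall>x\<in>{0..1}. phi x = phi 0 + integral {0..x} phi1" "phi1 0 = 0" "phi 1 = 0"
    using assms unfolding dom_A_def H2_01_def by blast+
  show "phi2 absolutely_integrable_on {0..1}" by fact
  show p1: "\<And>x. x \<in> {0..1} \<Longrightarrow> phi1 x = integral {0..x} phi2"
  proof -
    fix x :: real assume "x \<in> {0..1}"
    then have "phi1 x = phi1 0 + integral {0..x} phi2" using H(2) by blast
    then show "phi1 x = integral {0..x} phi2" using H(4) by simp
  qed
  have "phi2 integrable_on {0..1}" using H(1) set_lebesgue_integral_eq_integral(1) by blast
  then have "continuous_on {0..1} (\<lambda>x. integral {0..x} phi2)" by (rule indefinite_integral_continuous_1)
  then show c1: "continuous_on {0..1} phi1" by (rule continuous_on_eq) (use p1 in auto)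
  then have i1: "phi1 integrable_on {0..1}" by (rule integrable_continuous_interval)
  then have "continuous_on {0..1} (\<lambda>x. phi 0 + integral {0..x} phi1)"
    by (intro continuous_intros indefinite_integral_continuous_1)
  then show "continuous_on {0..1} phi" by (rule continuous_on_eq) (metis H(3))
  fix x :: real assume x: "x \<in> {0..1}"
  have "integral {0..x} phi1 + integral {x..1} phi1 = integral {0..1} phi1"
    using x by (intro Henstock_Kurzweil_Integration.integral_combine i1) auto
  moreover have "phi 1 = phi 0 + integral {0..1} phi1" using H(3) by (meson atLeastAtMost_iff order_refl zero_le_one)
  moreover have "phi x = phi 0 + integral {0..x} phi1" using H(3) x by blast
  ultimately have "phi 0 + integral {0..x} phi1 + integral {x..1} phi1 = 0" "phi x = phi 0 + integral {0..x} phi1"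
    using H(5) by (simp_all add: add.assoc)
  then show "phi x = - integral {x..1} phi1" by (simp add: eq_neg_iff_add_eq_0)
qed

lemma energy:
  assumes "dom_A phi phi1 phi2"
  shows "integral {0..1} (\<lambda>x. phi2 x * cnj (phi x)) = - complex_of_real (integral {0..1} (\<lambda>x. (cmod (phi1 x))\<^sup>2))"
proof -
  note D = dom_basic[OF assms]
  have hc: "continuous_on {0..1} (\<lambda>t. cnj (phi1 t))" using D(1) by (intro continuous_intros)
  have i1: "phi1 integrable_on {a..b}" if "{a..b} \<subseteq> {0..1}" for a b
    using integrable_continuous_interval[OF D(1)] integrable_on_subinterval that by blast
  have "integral {0..1} (\<lambda>x. phi2 x * cnj (phi x)) = - integral {0..1} (\<lambda>x. phi2 x * integral {x..1} (\<lambda>t. cnj (phi1 t)))"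
  proof -
    have "phi2 x * cnj (phi x) = - (phi2 x * integral {x..1} (\<lambda>t. cnj (phi1 t)))" if "x \<in> {0..1}" for x
      using D(4)[OF that] by (simp flip: integral_cnj)
    then have "integral {0..1} (\<lambda>x. phi2 x * cnj (phi x)) = integral {0..1} (\<lambda>x. - (phi2 x * integral {x..1} (\<lambda>t. cnj (phi1 t))))"
      by (intro integral_cong) auto
    then show ?thesis by (simp add: integral_neg)
  qed
  also have "integral {0..1} (\<lambda>x. phi2 x * integral {x..1} (\<lambda>t. cnj (phi1 t))) = integral {0..1} (\<lambda>t. cnj (phi1 t) * integral {0..t} phi2)"
    by (rule ibp[OF D(5) hc])
  also have "\<dots> = integral {0..1} (\<lambda>t. complex_of_real ((cmod (phi1 t))\<^sup>2))"
  proof (rule integral_cong)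
    fix t :: real assume "t \<in> {0..1}"
    then show "cnj (phi1 t) * integral {0..t} phi2 = complex_of_real ((cmod (phi1 t))\<^sup>2)"
    proof -
      have "phi1 t = integral {0..t} phi2" using D(3) \<open>t \<in> {0..1}\<close> by blast
      then show ?thesis by (metis complex_norm_square mult.commute)
    qed
  qed
  also have "\<dots> = complex_of_real (integral {0..1} (\<lambda>x. (cmod (phi1 x))\<^sup>2))"
    by (rule integral_of_real_HK) (intro integrable_continuous_interval continuous_intros D(1))
  finally show ?thesis .
qed



lemma re_coef:
  fixes d \<mu> u2 m :: real
  assumes d: "d > 0" and u2: "u2 \<le> -m" and m: "m > 0"
  shows "m / cmod (Complex (-d) \<mu>) \<le> Re (Complex 1 (- sgn \<mu>) * (complex_of_real u2 / Complex (-d) \<mu>))"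
proof -
  define r where "r = cmod (Complex (-d) \<mu>)"
  have r2: "r\<^sup>2 = d\<^sup>2 + \<mu>\<^sup>2" unfolding r_def by (simp add: cmod_power2)
  have rpos: "r > 0" unfolding r_def using d by (auto simp: complex_eq_iff)
  have re: "Re (Complex 1 (- sgn \<mu>) * (complex_of_real u2 / Complex (-d) \<mu>)) = (-u2) * (d + \<bar>\<mu>\<bar>) / r\<^sup>2"
    unfolding r2 by (cases "\<mu> > 0"; cases "\<mu> < 0") (auto simp: Re_divide Im_divide divide_simps power2_eq_square algebra_simps)
  have "r \<le> d + \<bar>\<mu>\<bar>"
  proof -
    have "r\<^sup>2 \<le> (d + \<bar>\<mu>\<bar>)\<^sup>2" unfolding r2 using d by (simp add: power2_eq_square algebra_simps)
    then show ?thesis by (rule power2_le_imp_le) (use d in auto)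
  qed
  moreover have "m \<le> -u2" using u2 by simp
  ultimately have "m * r \<le> (-u2) * (d + \<bar>\<mu>\<bar>)"
    using mult_mono[of m "-u2" r "d + \<bar>\<mu>\<bar>"] m rpos by simp
  then have "m / r \<le> (-u2) * (d + \<bar>\<mu>\<bar>) / r\<^sup>2"
    using rpos by (simp add: field_simps power2_eq_square)
  then show ?thesis using re unfolding r_def by simp
qed

lemma Re_mult_oR: "Re (z * complex_of_real r) = Re z * r" by simp

lemma pointwise_main:
  fixes p p2 vv W c :: complex and u2 \<alpha> m :: real
  assumes eq: "W * (- p2 + complex_of_real \<alpha> * p) + complex_of_real u2 * p = vv"
    and W: "W \<noteq> 0" and c: "cmod c \<le> 2" "Re c = 1" and \<alpha>: "\<alpha> \<ge> 0"
    and co: "m / cmod W \<le> Re (c * (complex_of_real u2 / W))" and m: "m > 0"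
  shows "Re (c * (- p2 * cnj p)) \<le> (cmod vv)\<^sup>2 / (m * cmod W)"
proof -
  define P where "P = (cmod p)\<^sup>2"
  have pp: "p * cnj p = complex_of_real P" unfolding P_def by (metis complex_norm_square)
  have m2: "- p2 = (vv - complex_of_real u2 * p) / W - complex_of_real \<alpha> * p"
    using eq W by (simp add: field_simps)
  have "- p2 * cnj p = ((vv - complex_of_real u2 * p) / W - complex_of_real \<alpha> * p) * cnj p"
    by (simp only: m2)
  also have "\<dots> = vv * cnj p / W - (complex_of_real u2 / W) * (p * cnj p) - complex_of_real \<alpha> * (p * cnj p)"
    by (simp add: diff_divide_distrib algebra_simps)
  finally have "- p2 * cnj p = vv * cnj p / W - (complex_of_real u2 / W) * (p * cnj p) - complex_of_real \<alpha> * (p * cnj p)" .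
  then have "- p2 * cnj p = vv * cnj p / W - (complex_of_real u2 / W) * complex_of_real P - complex_of_real (\<alpha> * P)"
    unfolding pp by simp
  then have "c * (- p2 * cnj p) = c * (vv * cnj p / W) - (c * (complex_of_real u2 / W)) * complex_of_real P - c * complex_of_real (\<alpha> * P)"
    by (simp only: right_diff_distrib mult.assoc)
  then have e: "Re (c * (- p2 * cnj p)) = Re (c * (vv * cnj p / W)) - P * Re (c * (complex_of_real u2 / W)) - \<alpha> * P"
  proof -
    have r: "Re (z * complex_of_real r) = Re z * r" for z r by simp
    show ?thesis using c(2) unfolding \<open>c * (- p2 * cnj p) = _\<close> minus_complex.sel r
      by (simp add: mult.commute)
  qed
  have "Re (c * (vv * cnj p / W)) \<le> cmod (c * (vv * cnj p / W))" by (rule complex_Re_le_cmod)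
  also have "\<dots> = cmod c * (cmod vv * cmod p) / cmod W" by (simp add: norm_mult norm_divide)
  also have "\<dots> \<le> 2 * (cmod vv * cmod p) / cmod W"
    using c(1) by (intro divide_right_mono mult_right_mono) auto
  finally have t1: "Re (c * (vv * cnj p / W)) \<le> 2 * (cmod vv * cmod p) / cmod W" .
  have P0: "P \<ge> 0" unfolding P_def by simp
  have t2: "P * (m / cmod W) \<le> P * Re (c * (complex_of_real u2 / W))"
    using mult_left_mono[OF co P0] .
  have Wp: "cmod W > 0" using W by simp
  have amgm: "2 * (cmod vv * cmod p) \<le> m * P + (cmod vv)\<^sup>2 / m"
  proof -
    have "0 \<le> (m * cmod p - cmod vv)\<^sup>2 / m" using m by simp
    also have "\<dots> = m * P + (cmod vv)\<^sup>2 / m - 2 * (cmod vv * cmod p)"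
      unfolding P_def using m by (simp add: field_simps power2_eq_square)
    finally show ?thesis by simp
  qed
  have "Re (c * (- p2 * cnj p)) \<le> 2 * (cmod vv * cmod p) / cmod W - P * (m / cmod W) - \<alpha> * P"
    using e t1 t2 by linarith
  also have "\<dots> \<le> 2 * (cmod vv * cmod p) / cmod W - P * (m / cmod W)"
    using \<alpha> P0 by simp
  also have "\<dots> = (2 * (cmod vv * cmod p) - m * P) / cmod W"
    using Wp by (simp add: field_simps)
  also have "\<dots> \<le> ((cmod vv)\<^sup>2 / m) / cmod W"
    using amgm Wp by (intro divide_right_mono) auto
  also have "\<dots> = (cmod vv)\<^sup>2 / (m * cmod W)" by simp
  finally show ?thesis .
qed



lemma AE_on_negligible:
  assumes "AE x in lebesgue_on S. P x" and S: "S \<in> sets lebesgue"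
  obtains N where "negligible N" "\<And>x. x \<in> S \<Longrightarrow> x \<notin> N \<Longrightarrow> P x"
proof -
  obtain N where N: "{x \<in> space (lebesgue_on S). \<not> P x} \<subseteq> N" "emeasure (lebesgue_on S) N = 0" "N \<in> sets (lebesgue_on S)"
    using assms(1) by (rule AE_E)
  then have "N \<in> null_sets (lebesgue_on S)" by auto
  then have "N \<in> null_sets lebesgue" using null_sets_restrict_space[OF S] by auto
  then have "negligible N" using negligible_iff_null_sets by blast
  moreover have "\<And>x. x \<in> S \<Longrightarrow> x \<notin> N \<Longrightarrow> P x" using N(1) by auto
  ultimately show ?thesis using that by blast
qed

lemma key_energy:
  fixes U U2 :: "real \<Rightarrow> real" and v phi phi1 phi2 :: "real \<Rightarrow> complex"
  assumes dom: "dom_A phi phi1 phi2"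
    and eq: "A_eq U U2 (Complex \<mu> \<nu>) alpha phi phi2 v"
    and vm: "v \<in> borel_measurable (lebesgue_on {0..1})" and vb: "\<And>x. x \<in> {0..1} \<Longrightarrow> cmod (v x) \<le> Bv"
    and Uc: "continuous_on {0..1} U" and U2c: "continuous_on {0..1} U2"
    and m: "m > 0" and U2m: "\<And>x. x \<in> {0..1} \<Longrightarrow> U2 x \<le> -m"
    and a: "a > 0" and Ua: "\<And>x. x \<in> {0..1} \<Longrightarrow> a \<le> \<nu> - U x" and alpha: "alpha \<ge> 0"
  shows "integral {0..1} (\<lambda>x. (cmod (phi1 x))\<^sup>2) \<le>
         integral {0..1} (\<lambda>x. (cmod (v x))\<^sup>2 / (m * cmod (complex_of_real (U x) + \<i> * Complex \<mu> \<nu>)))"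
proof -
  note D = dom_basic[OF dom]
  define W where "W x = complex_of_real (U x) + \<i> * Complex \<mu> \<nu>" for x
  have WC: "W x = Complex (- (\<nu> - U x)) \<mu>" for x unfolding W_def by (simp add: complex_eq_iff)
  have Wc: "continuous_on {0..1} W" unfolding W_def using Uc by (intro continuous_intros)
  have Wa: "cmod (W x) \<ge> a" if "x \<in> {0..1}" for x
  proof -
    have "a \<le> \<bar>Re (W x)\<bar>" using Ua[OF that] unfolding WC by simp
    also have "\<dots> \<le> cmod (W x)" by (rule abs_Re_le_cmod)
    finally show ?thesis .
  qed
  have W0: "W x \<noteq> 0" if "x \<in> {0..1}" for x using Wa[OF that] a by auto
  define c where "c = Complex 1 (- sgn \<mu>)"
  have c1: "Re c = 1" unfolding c_def by simp
  have c2: "cmod c \<le> 2"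
  proof -
    have "cmod c \<le> \<bar>Re c\<bar> + \<bar>Im c\<bar>" by (rule cmod_le)
    also have "\<dots> \<le> 2" unfolding c_def by (simp add: abs_sgn_eq)
    finally show ?thesis .
  qed
  obtain N where N: "negligible N" and Neq: "\<And>x. x \<in> {0..1} \<Longrightarrow> x \<notin> N \<Longrightarrow>
      W x * (- phi2 x + complex_of_real (alpha\<^sup>2) * phi x) + complex_of_real (U2 x) * phi x = v x"
    using AE_on_negligible[OF eq[unfolded A_eq_def]] unfolding W_def by auto
  define L where "L x = Re (c * (- phi2 x * cnj (phi x)))" for x
  define b where "b x = (cmod (v x))\<^sup>2 / (m * cmod (W x))" for x
  have Lb: "L x \<le> b x" if "x \<in> {0..1}" "x \<notin> N" for x
    unfolding L_def b_def
  proof (rule pointwise_main[OF Neq[OF that] W0[OF that(1)] c2 c1 _ _ m])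
    show "0 \<le> alpha\<^sup>2" by simp
    show "m / cmod (W x) \<le> Re (c * (complex_of_real (U2 x) / W x))"
      unfolding WC c_def using re_coef[of "\<nu> - U x" "U2 x" m \<mu>] Ua[OF that(1)] a U2m[OF that(1)] m by simp
  qed
  have pc: "continuous_on {0..1} (\<lambda>x. cnj (phi x))" using D(2) by (intro continuous_intros)
  have pm: "(\<lambda>x. cnj (phi x)) \<in> borel_measurable (lebesgue_on {0..1})"
    by (rule continuous_imp_measurable_on_sets_lebesgue[OF pc]) simp
  have pb: "bounded ((\<lambda>x. cnj (phi x)) ` {0..1})"
    by (rule compact_imp_bounded[OF compact_continuous_image[OF pc compact_Icc]])
  have pp2: "(\<lambda>x. cnj (phi x) * phi2 x) absolutely_integrable_on {0..1}"
    by (rule absolutely_integrable_bounded_measurable_product[OF bilinear_times pm _ pb D(5)]) simp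
  then have pp2i: "(\<lambda>x. - phi2 x * cnj (phi x)) integrable_on {0..1}"
    using set_lebesgue_integral_eq_integral(1) integrable_neg by (force simp: mult.commute)
  have Li: "L integrable_on {0..1}"
  proof -
    have "((\<lambda>z. Re (c * z)) \<circ> (\<lambda>x. - phi2 x * cnj (phi x))) integrable_on {0..1}"
      by (rule integrable_linear[OF pp2i]) (intro bounded_linear_compose[OF bounded_linear_Re] bounded_linear_mult_right)
    then show ?thesis unfolding L_def o_def .
  qed
  have intL: "integral {0..1} L = integral {0..1} (\<lambda>x. (cmod (phi1 x))\<^sup>2)"
  proof -
    have "integral {0..1} L = integral {0..1} ((\<lambda>z. Re (c * z)) \<circ> (\<lambda>x. - phi2 x * cnj (phi x)))"
      unfolding L_def o_def ..
    also have "\<dots> = Re (c * integral {0..1} (\<lambda>x. - phi2 x * cnj (phi x)))"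
      by (rule integral_linear[OF pp2i]) (intro bounded_linear_compose[OF bounded_linear_Re] bounded_linear_mult_right)
    also have "integral {0..1} (\<lambda>x. - phi2 x * cnj (phi x)) = - integral {0..1} (\<lambda>x. phi2 x * cnj (phi x))"
      by (simp add: integral_neg)
    also have "\<dots> = complex_of_real (integral {0..1} (\<lambda>x. (cmod (phi1 x))\<^sup>2))"
      using energy[OF dom] by simp
    finally show ?thesis using c1 by (simp add: Re_mult_oR)
  qed
  have vbm: "(\<lambda>x. (cmod (v x))\<^sup>2 / (m * cmod (W x))) \<in> borel_measurable (lebesgue_on {0..1})"
  proof -
    have "(\<lambda>x. cmod (W x)) \<in> borel_measurable (lebesgue_on {0..1})"
      by (rule continuous_imp_measurable_on_sets_lebesgue) (use Wc in \<open>auto intro!: continuous_intros\<close>)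
    then show ?thesis using vm by measurable
  qed
  have bi: "b integrable_on {0..1}"
  proof -
    have "b absolutely_integrable_on {0..1}"
    proof (rule measurable_bounded_by_integrable_imp_absolutely_integrable[where g="\<lambda>x. Bv\<^sup>2 / (m * a)"])
      show "b \<in> borel_measurable (lebesgue_on {0..1})" unfolding b_def by (rule vbm)
      show "(\<lambda>x::real. Bv\<^sup>2 / (m * a)) integrable_on {0..1}" by (intro integrable_continuous_interval continuous_intros)
      fix x :: real assume x: "x \<in> {0..1}"
      have "norm (b x) = (cmod (v x))\<^sup>2 / (m * cmod (W x))" unfolding b_def using m by simp
      also have "\<dots> \<le> Bv\<^sup>2 / (m * a)"
      proof (rule frac_le)
        show "(cmod (v x))\<^sup>2 \<le> Bv\<^sup>2" using vb[OF x] by (meson norm_ge_zero power_mono)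
        show "0 < m * a" using m a by simp
        show "m * a \<le> m * cmod (W x)" using Wa[OF x] m by simp
      qed simp
      finally show "norm (b x) \<le> Bv\<^sup>2 / (m * a)" .
    qed simp
    then show ?thesis using set_lebesgue_integral_eq_integral(1) by blast
  qed
  define L2 where "L2 x = (if x \<in> N then b x else L x)" for x
  have L2i: "L2 integrable_on {0..1}"
    by (rule integrable_spike[OF Li N]) (auto simp: L2_def)
  have "integral {0..1} L = integral {0..1} L2"
    by (rule integral_spike[OF N]) (auto simp: L2_def)
  also have "\<dots> \<le> integral {0..1} b"
    by (rule integral_le[OF L2i bi]) (use Lb in \<open>auto simp: L2_def\<close>)
  finally show ?thesis using intL unfolding b_def W_def by simp
qed



lemma nonpos_deriv_dec:
  fixes f f' :: "real \<Rightarrow> real"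
  assumes ab: "a \<le> b" and d: "\<And>t. t \<in> {a..b} \<Longrightarrow> (f has_real_derivative f' t) (at t within {a..b})"
    and n: "\<And>t. t \<in> {a..b} \<Longrightarrow> f' t \<le> 0"
  shows "f b \<le> f a"
proof -
  have "\<exists>\<xi>\<in>{a..b}. f b - f a = (*) (f' \<xi>) (b - a)"
  proof (rule mvt_very_simple[OF ab, of f "\<lambda>t. (*) (f' t)"])
    fix x assume "a \<le> x" "x \<le> b"
    then show "(f has_derivative (*) (f' x)) (at x within {a..b})"
      using has_field_derivative_imp_has_derivative[OF d] by auto
  qed
  then obtain \<xi> where \<xi>: "\<xi> \<in> {a..b}" "f b - f a = (*) (f' \<xi>) (b - a)" by blast
  have "f' \<xi> * (b - a) \<le> 0" using n[OF \<xi>(1)] ab by (simp add: mult_nonpos_nonneg)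
  then show ?thesis using \<xi>(2) by simp
qed

lemma U_facts:
  assumes C3: "C3_on_01 U U1 U2 U3" and S: "(SUP x\<in>{0..1}. U2 x) < 0" and U10: "U1 0 = 0"
  obtains m where "m > 0" "\<And>x. x \<in> {0..1} \<Longrightarrow> U2 x \<le> -m" "continuous_on {0..1} U"
    "continuous_on {0..1} U2" "\<And>x. x \<in> {0..1} \<Longrightarrow> U x \<le> U 0 - m / 2 * x\<^sup>2"
proof -
  have dU: "\<And>x. x \<in> {0..1} \<Longrightarrow> (U has_real_derivative U1 x) (at x within {0..1})"
    and dU1: "\<And>x. x \<in> {0..1} \<Longrightarrow> (U1 has_real_derivative U2 x) (at x within {0..1})"
    and dU2: "\<And>x. x \<in> {0..1} \<Longrightarrow> (U2 has_real_derivative U3 x) (at x within {0..1})"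
    using C3 unfolding C3_on_01_def by auto
  have Uc: "continuous_on {0..1} U"
    using dU DERIV_continuous continuous_on_eq_continuous_within by blast
  have U2c: "continuous_on {0..1} U2"
    using dU2 DERIV_continuous continuous_on_eq_continuous_within by blast
  have bdd: "bdd_above (U2 ` {0..1})"
    using compact_imp_bounded[OF compact_continuous_image[OF U2c compact_Icc]] by (rule bounded_imp_bdd_above)
  define m where "m = - (SUP x\<in>{0..1}. U2 x)"
  have m: "m > 0" using S unfolding m_def by simp
  have U2m: "U2 x \<le> -m" if "x \<in> {0..1}" for x
    unfolding m_def using cSUP_upper[OF that bdd] by simp
  have U1b: "U1 t + m * t \<le> 0" if "t \<in> {0..1}" for t
  proof -
    have "U1 t + m * t \<le> U1 0 + m * 0"
    proof (rule nonpos_deriv_dec[where f="\<lambda>t. U1 t + m * t" and f'="\<lambda>t. U2 t + m"])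
      show "0 \<le> t" using that by simp
      fix s assume s: "s \<in> {0..t}"
      then have s1: "s \<in> {0..1}" using that by auto
      show "((\<lambda>t. U1 t + m * t) has_real_derivative U2 s + m) (at s within {0..t})"
        using DERIV_subset[OF dU1[OF s1], of "{0..t}"] that
        by (auto intro!: derivative_eq_intros)
      show "U2 s + m \<le> 0" using U2m[OF s1] by simp
    qed
    then show ?thesis using U10 by simp
  qed
  have Ub: "U x \<le> U 0 - m / 2 * x\<^sup>2" if "x \<in> {0..1}" for x
  proof -
    have "U x + m / 2 * x\<^sup>2 \<le> U 0 + m / 2 * 0\<^sup>2"
    proof (rule nonpos_deriv_dec[where f="\<lambda>t. U t + m / 2 * t\<^sup>2" and f'="\<lambda>t. U1 t + m * t"])
      show "0 \<le> x" using that by simp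
      fix s assume s: "s \<in> {0..x}"
      then have s1: "s \<in> {0..1}" using that by auto
      show "((\<lambda>t. U t + m / 2 * t\<^sup>2) has_real_derivative U1 s + m * s) (at s within {0..x})"
        using DERIV_subset[OF dU[OF s1], of "{0..x}"] that
        by (auto intro!: derivative_eq_intros simp: power2_eq_square)
      show "U1 s + m * s \<le> 0" using U1b[OF s1] .
    qed
    then show ?thesis by simp
  qed
  show ?thesis using that[OF m U2m Uc U2c Ub] by blast
qed

lemma poincare:
  assumes dom: "dom_A phi phi1 phi2"
  shows "integral {0..1} (\<lambda>x. (cmod (phi x))\<^sup>2 + (cmod (phi1 x))\<^sup>2) \<le> 2 * integral {0..1} (\<lambda>x. (cmod (phi1 x))\<^sup>2)"
proof -
  note D = dom_basic[OF dom]
  define L where "L = integral {0..1} (\<lambda>x. cmod (phi1 x))"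
  define X where "X = integral {0..1} (\<lambda>x. (cmod (phi1 x))\<^sup>2)"
  have n1c: "continuous_on {0..1} (\<lambda>x. cmod (phi1 x))" using D(1) by (intro continuous_intros)
  have nint: "(\<lambda>x. cmod (phi1 x)) integrable_on {a..b}" if "{a..b} \<subseteq> {0..1}" for a b
    using integrable_continuous_interval[OF n1c] integrable_on_subinterval that by blast
  have p1int: "phi1 integrable_on {a..b}" if "{a..b} \<subseteq> {0..1}" for a b
    using integrable_continuous_interval[OF D(1)] integrable_on_subinterval that by blast
  have phiL: "cmod (phi x) \<le> L" if x: "x \<in> {0..1}" for x
  proof -
    have "cmod (phi x) = norm (integral {x..1} phi1)" using D(4)[OF x] by simp
    also have "\<dots> \<le> integral {x..1} (\<lambda>t. cmod (phi1 t))"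
      by (rule integral_norm_bound_integral) (use x p1int nint in auto)
    also have "\<dots> \<le> L" unfolding L_def
      by (rule integral_subset_le) (use x nint in auto)
    finally show ?thesis .
  qed
  have L0: "0 \<le> L" unfolding L_def by (rule integral_nonneg) (use nint in auto)
  have LX: "L\<^sup>2 \<le> X"
  proof -
    have i1: "(\<lambda>x. (cmod (phi1 x))\<^sup>2) integrable_on {0..1}"
      by (intro integrable_continuous_interval continuous_intros D(1))
    have "0 \<le> integral {0..1} (\<lambda>x. (cmod (phi1 x) - L)\<^sup>2)"
      by (rule integral_nonneg) (auto intro!: integrable_continuous_interval continuous_intros D(1))
    also have "integral {0..1} (\<lambda>x. (cmod (phi1 x) - L)\<^sup>2) = integral {0..1} (\<lambda>x. (cmod (phi1 x))\<^sup>2 - (2 * L) * cmod (phi1 x) + L\<^sup>2)"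
      by (simp add: power2_diff algebra_simps)
    also have "\<dots> = X - (2 * L) * L + L\<^sup>2"
    proof -
      have "integral {0..1} (\<lambda>x. (cmod (phi1 x))\<^sup>2 - (2 * L) * cmod (phi1 x) + L\<^sup>2)
          = integral {0..1} (\<lambda>x. (cmod (phi1 x))\<^sup>2 - (2 * L) * cmod (phi1 x)) + integral {0..1} (\<lambda>x::real. L\<^sup>2)"
        by (rule integral_add) (auto intro!: integrable_continuous_interval continuous_intros D(1))
      also have "integral {0..1} (\<lambda>x. (cmod (phi1 x))\<^sup>2 - (2 * L) * cmod (phi1 x)) = X - (2 * L) * L"
        unfolding X_def L_def by (subst integral_diff) (auto intro!: integrable_continuous_interval continuous_intros D(1))
      finally show ?thesis by simp
    qed
    finally show ?thesis by (simp add: power2_eq_square)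
  qed
  have "integral {0..1} (\<lambda>x. (cmod (phi x))\<^sup>2 + (cmod (phi1 x))\<^sup>2) = integral {0..1} (\<lambda>x. (cmod (phi x))\<^sup>2) + X"
    unfolding X_def by (rule integral_add) (auto intro!: integrable_continuous_interval continuous_intros D(1) D(2))
  also have "integral {0..1} (\<lambda>x. (cmod (phi x))\<^sup>2) \<le> integral {0..1} (\<lambda>x::real. L\<^sup>2)"
  proof (rule integral_le)
    show "(\<lambda>x. (cmod (phi x))\<^sup>2) integrable_on {0..1}" by (auto intro!: integrable_continuous_interval continuous_intros D(2))
    show "(\<lambda>x::real. L\<^sup>2) integrable_on {0..1}" by (auto intro!: integrable_continuous_interval continuous_intros)
    fix x :: real assume "x \<in> {0..1}"
    then show "(cmod (phi x))\<^sup>2 \<le> L\<^sup>2" using phiL by (simp add: power_mono)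
  qed
  also have "integral {0..1} (\<lambda>x::real. L\<^sup>2) = L\<^sup>2" by simp
  finally show ?thesis using LX unfolding X_def by simp
qed

lemma int_inv_bound:
  fixes \<delta> k :: real
  assumes d: "\<delta> > 0" and k: "k > 0"
  shows "integral {0..1} (\<lambda>x. 1 / (\<delta> + k * x\<^sup>2)) \<le> pi / (2 * sqrt (k * \<delta>))"
proof -
  define q where "q = sqrt (k / \<delta>)"
  have q: "q > 0" unfolding q_def using d k by simp
  have F: "((\<lambda>x. arctan (q * x) / sqrt (k * \<delta>)) has_real_derivative 1 / (\<delta> + k * x\<^sup>2)) (at x within {0..1})" for x
  proof -
    have "((\<lambda>x. arctan (q * x)) has_real_derivative (inverse (1 + (q * x)\<^sup>2) * q)) (at x within {0..1})"
      by (auto intro!: derivative_eq_intros)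
    then have "((\<lambda>x. arctan (q * x) / sqrt (k * \<delta>)) has_real_derivative (inverse (1 + (q * x)\<^sup>2) * q) / sqrt (k * \<delta>)) (at x within {0..1})"
      by (rule DERIV_cdivide)
    moreover have "(inverse (1 + (q * x)\<^sup>2) * q) / sqrt (k * \<delta>) = 1 / (\<delta> + k * x\<^sup>2)"
    proof -
      have q2: "q\<^sup>2 = k / \<delta>" unfolding q_def using d k by simp
      have sq: "q / sqrt (k * \<delta>) = 1 / \<delta>" unfolding q_def using d k
        by (simp add: real_sqrt_divide real_sqrt_mult field_simps)
      have "(inverse (1 + (q * x)\<^sup>2) * q) / sqrt (k * \<delta>) = inverse (1 + q\<^sup>2 * x\<^sup>2) * (1 / \<delta>)"
        by (simp only: times_divide_eq_right[symmetric] sq power_mult_distrib)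
      also have "\<dots> = 1 / (\<delta> + k * x\<^sup>2)" unfolding q2 using d by (simp add: field_simps)
      finally show ?thesis .
    qed
    ultimately show ?thesis by simp
  qed
  have "((\<lambda>x. 1 / (\<delta> + k * x\<^sup>2)) has_integral (arctan (q * 1) / sqrt (k * \<delta>) - arctan (q * 0) / sqrt (k * \<delta>))) {0..1}"
    by (rule fundamental_theorem_of_calculus) (use F in \<open>auto simp: has_real_derivative_iff_has_vector_derivative\<close>)
  then have "integral {0..1} (\<lambda>x. 1 / (\<delta> + k * x\<^sup>2)) = arctan q / sqrt (k * \<delta>)"
    by (simp add: integral_unique)
  also have "\<dots> \<le> (pi / 2) / sqrt (k * \<delta>)"
    using arctan_ubound[of q] d k by (intro divide_right_mono) auto
  finally show ?thesis by simp
qed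

lemma int_pow_bound:
  fixes \<delta> k s :: real
  assumes d: "\<delta> > 0" and k: "k > 0" and s: "s \<ge> 1"
  shows "integral {0..1} (\<lambda>x. (\<delta> + k * x\<^sup>2) powr (- s)) \<le> \<delta> powr (1/2 - s) * (pi / (2 * sqrt k))"
proof -
  have pos: "\<delta> + k * x\<^sup>2 > 0" for x using d k by (simp add: add_pos_nonneg)
  have nz: "\<delta> + k * x\<^sup>2 \<noteq> 0" for x using pos[of x] by simp
  have "integral {0..1} (\<lambda>x. (\<delta> + k * x\<^sup>2) powr (- s)) \<le> integral {0..1} (\<lambda>x. \<delta> powr (1 - s) * (1 / (\<delta> + k * x\<^sup>2)))"
  proof (rule integral_le)
    show "(\<lambda>x. (\<delta> + k * x\<^sup>2) powr (- s)) integrable_on {0..1}"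
      using nz by (auto intro!: integrable_continuous_interval continuous_intros)
    show "(\<lambda>x. \<delta> powr (1 - s) * (1 / (\<delta> + k * x\<^sup>2))) integrable_on {0..1}"
      using nz by (auto intro!: integrable_continuous_interval continuous_intros)
    fix x :: real assume "x \<in> {0..1}"
    have "(\<delta> + k * x\<^sup>2) powr (- s) = (\<delta> + k * x\<^sup>2) powr (1 - s) * (\<delta> + k * x\<^sup>2) powr (-1)"
    proof -
      have "(1 - s) + (-1) = - s" by simp
      then show ?thesis by (metis powr_add)
    qed
    also have "(\<delta> + k * x\<^sup>2) powr (1 - s) \<le> \<delta> powr (1 - s)"
      using s d k by (intro powr_mono2') auto
    then have "(\<delta> + k * x\<^sup>2) powr (1 - s) * (\<delta> + k * x\<^sup>2) powr (-1) \<le> \<delta> powr (1 - s) * (\<delta> + k * x\<^sup>2) powr (-1)"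
      by (rule mult_right_mono) simp
    also have "(\<delta> + k * x\<^sup>2) powr (-1) = 1 / (\<delta> + k * x\<^sup>2)" using pos[of x] by (simp add: powr_minus_divide)
    finally show "(\<delta> + k * x\<^sup>2) powr (- s) \<le> \<delta> powr (1 - s) * (1 / (\<delta> + k * x\<^sup>2))" .
  qed
  also have "\<dots> = \<delta> powr (1 - s) * integral {0..1} (\<lambda>x. 1 / (\<delta> + k * x\<^sup>2))" by (rule integral_mult_right)
  also have "\<dots> \<le> \<delta> powr (1 - s) * (pi / (2 * sqrt (k * \<delta>)))"
    by (rule mult_left_mono[OF int_inv_bound[OF d k]]) simp
  also have "\<dots> = \<delta> powr (1/2 - s) * (pi / (2 * sqrt k))"
  proof -
    have "\<delta> powr (1 - s) = \<delta> powr (1/2 - s) * sqrt \<delta>"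
      using d by (simp add: powr_add[symmetric] powr_half_sqrt[symmetric])
    then show ?thesis using d k by (simp add: real_sqrt_mult field_simps)
  qed
  finally show ?thesis .
qed



lemma Z_integrable:
  fixes v :: "real \<Rightarrow> complex" and w :: "real \<Rightarrow> real"
  assumes vm: "v \<in> borel_measurable (lebesgue_on {0..1})" and vb: "\<And>x. x \<in> {0..1} \<Longrightarrow> cmod (v x) \<le> Bv"
    and wc: "continuous_on {0..1} w" and wl: "\<And>x. x \<in> {0..1} \<Longrightarrow> w x \<ge> a" and a: "a > 0" and m: "m > 0"
  shows "(\<lambda>x. (cmod (v x))\<^sup>2 / (m * w x)) integrable_on {0..1}"
proof -
  have wm: "w \<in> borel_measurable (lebesgue_on {0..1})"
    by (rule continuous_imp_measurable_on_sets_lebesgue[OF wc]) simp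
  have "(\<lambda>x. (cmod (v x))\<^sup>2 / (m * w x)) absolutely_integrable_on {0..1}"
  proof (rule measurable_bounded_by_integrable_imp_absolutely_integrable[where g="\<lambda>x. Bv\<^sup>2 / (m * a)"])
    show "(\<lambda>x. (cmod (v x))\<^sup>2 / (m * w x)) \<in> borel_measurable (lebesgue_on {0..1})"
      using vm wm by measurable
    show "(\<lambda>x::real. Bv\<^sup>2 / (m * a)) integrable_on {0..1}" by (intro integrable_continuous_interval continuous_intros)
    fix x :: real assume x: "x \<in> {0..1}"
    have "norm ((cmod (v x))\<^sup>2 / (m * w x)) = (cmod (v x))\<^sup>2 / (m * w x)" using m wl[OF x] a by simp
    also have "\<dots> \<le> Bv\<^sup>2 / (m * a)"
    proof (rule frac_le)
      show "(cmod (v x))\<^sup>2 \<le> Bv\<^sup>2" using vb[OF x] by (meson norm_ge_zero power_mono)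
      show "0 < m * a" using m a by simp
      show "m * a \<le> m * w x" using wl[OF x] m by simp
    qed simp
    finally show "norm ((cmod (v x))\<^sup>2 / (m * w x)) \<le> Bv\<^sup>2 / (m * a)" .
  qed simp
  then show ?thesis using set_lebesgue_integral_eq_integral(1) by blast
qed

lemma Z_inf:
  fixes v :: "real \<Rightarrow> complex" and w :: "real \<Rightarrow> real"
  assumes vm: "v \<in> borel_measurable (lebesgue_on {0..1})" and vb: "\<And>x. x \<in> {0..1} \<Longrightarrow> cmod (v x) \<le> Ni"
    and wc: "continuous_on {0..1} w" and wl: "\<And>x. x \<in> {0..1} \<Longrightarrow> w x \<ge> (\<delta> + k * x\<^sup>2) / 2"
    and d: "\<delta> > 0" and k: "k > 0" and m: "m > 0"
  shows "integral {0..1} (\<lambda>x. (cmod (v x))\<^sup>2 / (m * w x)) \<le> Ni\<^sup>2 * ((2 / m) * (pi / (2 * sqrt k))) * \<delta> powr (- (1/2))"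
proof -
  have wa: "w x \<ge> \<delta> / 2" if "x \<in> {0..1}" for x using wl[OF that] k by (smt (verit) divide_right_mono mult_nonneg_nonneg zero_le_power2)
  have pos: "\<delta> + k * x\<^sup>2 > 0" for x using d k by (simp add: add_pos_nonneg)
  have nz: "\<delta> + k * x\<^sup>2 \<noteq> 0" for x using pos[of x] by simp
  have "integral {0..1} (\<lambda>x. (cmod (v x))\<^sup>2 / (m * w x)) \<le> integral {0..1} (\<lambda>x. (Ni\<^sup>2 * (2 / m)) * (1 / (\<delta> + k * x\<^sup>2)))"
  proof (rule integral_le)
    show "(\<lambda>x. (cmod (v x))\<^sup>2 / (m * w x)) integrable_on {0..1}"
      by (rule Z_integrable[OF vm vb wc wa _ m]) (use d in auto)
    show "(\<lambda>x. (Ni\<^sup>2 * (2 / m)) * (1 / (\<delta> + k * x\<^sup>2))) integrable_on {0..1}"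
      using nz m by (auto intro!: integrable_continuous_interval continuous_intros)
    fix x :: real assume x: "x \<in> {0..1}"
    have wp: "w x > 0" using wa[OF x] d by simp
    have "(cmod (v x))\<^sup>2 / (m * w x) \<le> Ni\<^sup>2 / (m * ((\<delta> + k * x\<^sup>2) / 2))"
    proof (rule frac_le)
      show "(cmod (v x))\<^sup>2 \<le> Ni\<^sup>2" using vb[OF x] by (meson norm_ge_zero power_mono)
      show "0 < m * ((\<delta> + k * x\<^sup>2) / 2)" using m pos[of x] by simp
      show "m * ((\<delta> + k * x\<^sup>2) / 2) \<le> m * w x" using wl[OF x] m by simp
    qed simp
    also have "\<dots> = (Ni\<^sup>2 * (2 / m)) * (1 / (\<delta> + k * x\<^sup>2))" using m nz[of x] by (simp add: field_simps)
    finally show "(cmod (v x))\<^sup>2 / (m * w x) \<le> (Ni\<^sup>2 * (2 / m)) * (1 / (\<delta> + k * x\<^sup>2))" .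
  qed
  also have "\<dots> = (Ni\<^sup>2 * (2 / m)) * integral {0..1} (\<lambda>x. 1 / (\<delta> + k * x\<^sup>2))" by (rule integral_mult_right)
  also have "\<dots> \<le> (Ni\<^sup>2 * (2 / m)) * (pi / (2 * sqrt (k * \<delta>)))"
    by (rule mult_left_mono[OF int_inv_bound[OF d k]]) (use m in simp)
  also have "\<dots> = Ni\<^sup>2 * ((2 / m) * (pi / (2 * sqrt k))) * \<delta> powr (- (1/2))"
  proof -
    have e: "\<delta> powr (- (1/2)) = 1 / sqrt \<delta>" using d by (simp add: powr_minus_divide powr_half_sqrt)
    show ?thesis unfolding e using d k by (simp add: real_sqrt_mult field_simps)
  qed
  finally show ?thesis .
qed

lemma Z_2:
  fixes v :: "real \<Rightarrow> complex" and w :: "real \<Rightarrow> real"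
  assumes vm: "v \<in> borel_measurable (lebesgue_on {0..1})" and vb: "\<And>x. x \<in> {0..1} \<Longrightarrow> cmod (v x) \<le> Bv"
    and wc: "continuous_on {0..1} w" and wl: "\<And>x. x \<in> {0..1} \<Longrightarrow> w x \<ge> \<delta> / 2"
    and d: "\<delta> > 0" and m: "m > 0"
  shows "integral {0..1} (\<lambda>x. (cmod (v x))\<^sup>2 / (m * w x)) \<le> (2 / m) * (1 / \<delta>) * integral {0..1} (\<lambda>x. (cmod (v x))\<^sup>2)"
proof -
  have one: "(\<lambda>x. (cmod (v x))\<^sup>2) integrable_on {0..1}"
    using Z_integrable[OF vm vb continuous_on_const[of "{0..1}" 1], of 1 1] by simp
  have "integral {0..1} (\<lambda>x. (cmod (v x))\<^sup>2 / (m * w x)) \<le> integral {0..1} (\<lambda>x. ((2 / m) * (1 / \<delta>)) * (cmod (v x))\<^sup>2)"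
  proof (rule integral_le)
    show "(\<lambda>x. (cmod (v x))\<^sup>2 / (m * w x)) integrable_on {0..1}"
      by (rule Z_integrable[OF vm vb wc wl _ m]) (use d in auto)
    show "(\<lambda>x. ((2 / m) * (1 / \<delta>)) * (cmod (v x))\<^sup>2) integrable_on {0..1}"
      using integrable_cmul[OF one, of "(2 / m) * (1 / \<delta>)"] by simp
    fix x :: real assume x: "x \<in> {0..1}"
    have "(cmod (v x))\<^sup>2 / (m * w x) \<le> (cmod (v x))\<^sup>2 / (m * (\<delta> / 2))"
      using wl[OF x] m d by (intro divide_left_mono) auto
    also have "\<dots> = ((2 / m) * (1 / \<delta>)) * (cmod (v x))\<^sup>2" using m d by (simp add: field_simps)
    finally show "(cmod (v x))\<^sup>2 / (m * w x) \<le> ((2 / m) * (1 / \<delta>)) * (cmod (v x))\<^sup>2" .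
  qed
  also have "\<dots> = (2 / m) * (1 / \<delta>) * integral {0..1} (\<lambda>x. (cmod (v x))\<^sup>2)" by (rule integral_mult_right)
  finally show ?thesis .
qed

lemma sq_powr_half:
  fixes y pr :: real assumes "y \<ge> 0" "pr > 0"
  shows "(y\<^sup>2) powr (pr / 2) = y powr pr"
proof (cases "y = 0")
  case True then show ?thesis using assms by simp
next
  case False
  then have "y\<^sup>2 = y powr 2" using assms by simp
  then show ?thesis by (simp add: powr_powr)
qed

lemma Z_p:
  fixes v :: "real \<Rightarrow> complex" and w :: "real \<Rightarrow> real"
  assumes vm: "v \<in> borel_measurable (lebesgue_on {0..1})" and vb: "\<And>x. x \<in> {0..1} \<Longrightarrow> cmod (v x) \<le> Bv"
    and wc: "continuous_on {0..1} w" and wl: "\<And>x. x \<in> {0..1} \<Longrightarrow> w x \<ge> (\<delta> + k * x\<^sup>2) / 2"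
    and d: "\<delta> > 0" and k: "k > 0" and m: "m > 0" and p: "pr > 2"
    and N': "N' > 0" and IN: "integral {0..1} (\<lambda>x. cmod (v x) powr pr) \<le> N' powr pr"
  shows "integral {0..1} (\<lambda>x. (cmod (v x))\<^sup>2 / (m * w x)) \<le>
    N'\<^sup>2 * ((2 powr (pr / (pr - 2)) * (pi / (2 * sqrt k)) * \<delta> powr (1/2 - pr / (pr - 2))) powr (1 / (pr / (pr - 2)))) / m"
proof -
  define s where "s = pr / (pr - 2)"
  define r where "r = pr / 2"
  define K where "K = 2 powr s * (pi / (2 * sqrt k)) * \<delta> powr (1/2 - s)"
  define \<theta> where "\<theta> = K powr (1 / s)"
  have s1: "s > 1" unfolding s_def using p by (simp add: field_simps)
  have r1: "r > 1" unfolding r_def using p by simp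
  have rs: "1 / r + 1 / s = 1" unfolding r_def s_def using p by (simp add: field_simps)
  have Kp: "K > 0" unfolding K_def using k d by simp
  have \<theta>p: "\<theta> > 0" unfolding \<theta>_def using Kp by simp
  have \<theta>s: "\<theta> powr s = K" unfolding \<theta>_def using Kp s1 by (simp add: powr_powr)
  have pos: "\<delta> + k * x\<^sup>2 > 0" for x using d k by (simp add: add_pos_nonneg)
  have wp: "w x > 0" if "x \<in> {0..1}" for x using wl[OF that] pos[of x] by (smt (verit) half_gt_zero)
  have wa: "w x \<ge> \<delta> / 2" if "x \<in> {0..1}" for x
    using wl[OF that] k by (smt (verit) divide_right_mono mult_nonneg_nonneg zero_le_power2)
  have wsc: "continuous_on {0..1} (\<lambda>x. w x powr (- s))"
  proof (rule continuous_on_powr[OF wc continuous_on_const], rule ballI)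
    fix x :: real assume "x \<in> {0..1}"
    then show "w x \<noteq> 0" using wp[of x] by simp
  qed
  have wsi: "(\<lambda>x. w x powr (- s)) integrable_on {0..1}"
    by (rule integrable_continuous_interval[OF wsc])
  have J: "integral {0..1} (\<lambda>x. w x powr (- s)) \<le> K"
  proof -
    have "integral {0..1} (\<lambda>x. w x powr (- s)) \<le> integral {0..1} (\<lambda>x. 2 powr s * (\<delta> + k * x\<^sup>2) powr (- s))"
    proof (rule integral_le[OF wsi])
      show "(\<lambda>x. 2 powr s * (\<delta> + k * x\<^sup>2) powr (- s)) integrable_on {0..1}"
        using pos by (auto intro!: integrable_continuous_interval continuous_intros simp: less_imp_neq[symmetric] )
      fix x :: real assume x: "x \<in> {0..1}"
      have "w x powr (- s) \<le> ((\<delta> + k * x\<^sup>2) / 2) powr (- s)"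
        using wl[OF x] pos[of x] s1 by (intro powr_mono2') auto
      also have "\<dots> = 2 powr s * (\<delta> + k * x\<^sup>2) powr (- s)"
        by (simp add: powr_divide powr_minus_divide)
      finally show "w x powr (- s) \<le> 2 powr s * (\<delta> + k * x\<^sup>2) powr (- s)" .
    qed
    also have "\<dots> = 2 powr s * integral {0..1} (\<lambda>x. (\<delta> + k * x\<^sup>2) powr (- s))" by (rule integral_mult_right)
    also have "\<dots> \<le> 2 powr s * (\<delta> powr (1/2 - s) * (pi / (2 * sqrt k)))"
      by (rule mult_left_mono[OF int_pow_bound[OF d k]]) (use s1 in auto)
    finally show ?thesis unfolding K_def by (simp add: mult_ac)
  qed
  have vpm: "(\<lambda>x. cmod (v x) powr pr) \<in> borel_measurable (lebesgue_on {0..1})"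
    using vm by measurable
  have vpi: "(\<lambda>x. cmod (v x) powr pr) integrable_on {0..1}"
  proof -
    have "(\<lambda>x. cmod (v x) powr pr) absolutely_integrable_on {0..1}"
    proof (rule measurable_bounded_by_integrable_imp_absolutely_integrable[OF vpm, where g="\<lambda>x. Bv powr pr"])
      show "(\<lambda>x::real. Bv powr pr) integrable_on {0..1}" by (intro integrable_continuous_interval continuous_intros)
      fix x :: real assume x: "x \<in> {0..1}"
      show "norm (cmod (v x) powr pr) \<le> Bv powr pr"
        using vb[OF x] p by (simp add: powr_mono2)
    qed simp
    then show ?thesis using set_lebesgue_integral_eq_integral(1) by blast
  qed
  define c1 where "c1 = N'\<^sup>2 * \<theta> / m / r / N' powr pr"
  define c2 where "c2 = N'\<^sup>2 * \<theta> / m / s * \<theta> powr (- s)"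
  have c1p: "c1 \<ge> 0" unfolding c1_def using N' \<theta>p m r1 by simp
  have c2p: "c2 \<ge> 0" unfolding c2_def using N' \<theta>p m s1 by simp
  have "integral {0..1} (\<lambda>x. (cmod (v x))\<^sup>2 / (m * w x)) \<le> integral {0..1} (\<lambda>x. c1 * cmod (v x) powr pr + c2 * w x powr (- s))"
  proof (rule integral_le)
    show "(\<lambda>x. (cmod (v x))\<^sup>2 / (m * w x)) integrable_on {0..1}"
      by (rule Z_integrable[OF vm vb wc wa _ m]) (use d in auto)
    show "(\<lambda>x. c1 * cmod (v x) powr pr + c2 * w x powr (- s)) integrable_on {0..1}"
      using integrable_cmul[OF vpi, of c1] integrable_cmul[OF wsi, of c2] by (auto intro!: integrable_add)
    fix x :: real assume x: "x \<in> {0..1}"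
    define A where "A = (cmod (v x) / N')\<^sup>2"
    define B where "B = 1 / (\<theta> * w x)"
    have A0: "A \<ge> 0" and B0: "B \<ge> 0" unfolding A_def B_def using \<theta>p wp[OF x] by auto
    have Y: "A * B \<le> A powr r / r + B powr s / s"
      by (rule Youngs_inequality[OF r1 s1 rs A0 B0])
    have eq1: "(cmod (v x))\<^sup>2 / (m * w x) = (N'\<^sup>2 * \<theta> / m) * (A * B)"
      unfolding A_def B_def using N' \<theta>p m wp[OF x] by (simp add: field_simps power2_eq_square)
    have Ar: "A powr r = cmod (v x) powr pr / N' powr pr"
      unfolding A_def r_def using N' p by (simp add: sq_powr_half powr_divide)
    have Bs: "B powr s = \<theta> powr (- s) * w x powr (- s)"
      unfolding B_def using \<theta>p wp[OF x] by (simp add: powr_divide powr_mult powr_minus_divide)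
    have "(cmod (v x))\<^sup>2 / (m * w x) \<le> (N'\<^sup>2 * \<theta> / m) * (A powr r / r + B powr s / s)"
      unfolding eq1 using Y N' \<theta>p m by (intro mult_left_mono) auto
    also have "\<dots> = c1 * cmod (v x) powr pr + c2 * w x powr (- s)"
      unfolding Ar Bs c1_def c2_def using m r1 s1 N' by (simp add: field_simps)
    finally show "(cmod (v x))\<^sup>2 / (m * w x) \<le> c1 * cmod (v x) powr pr + c2 * w x powr (- s)" .
  qed
  also have "\<dots> = c1 * integral {0..1} (\<lambda>x. cmod (v x) powr pr) + c2 * integral {0..1} (\<lambda>x. w x powr (- s))"
    using integrable_cmul[OF vpi, of c1] integrable_cmul[OF wsi, of c2] by (simp add: integral_add)
  also have "\<dots> \<le> c1 * N' powr pr + c2 * K"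
    using IN J c1p c2p by (intro add_mono mult_left_mono) auto
  also have "\<dots> = (N'\<^sup>2 * \<theta> / m) * (1 / r + 1 / s)"
  proof -
    have "c1 * N' powr pr = (N'\<^sup>2 * \<theta> / m) * (1 / r)" unfolding c1_def using N' by simp
    moreover have "c2 * K = (N'\<^sup>2 * \<theta> / m) * (1 / s)"
      unfolding c2_def \<theta>s[symmetric] using \<theta>p by (simp add: powr_minus field_simps)
    ultimately show ?thesis by (simp add: distrib_left)
  qed
  also have "\<dots> = N'\<^sup>2 * \<theta> / m" using rs by simp
  finally show ?thesis unfolding \<theta>_def K_def s_def .
qed



lemma sq_limit:
  fixes N c Z :: real
  assumes N: "N \<ge> 0" and c: "c \<ge> 0" and h: "\<And>N'. N' > N \<Longrightarrow> Z \<le> N'\<^sup>2 * c"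
  shows "Z \<le> N\<^sup>2 * c"
proof -
  have lim: "(\<lambda>n. (N + inverse (real (Suc n)))\<^sup>2 * c) \<longlonglongrightarrow> (N + 0)\<^sup>2 * c"
    by (intro tendsto_intros LIMSEQ_inverse_real_of_nat)
  have "Z \<le> (N + 0)\<^sup>2 * c"
    by (rule LIMSEQ_le_const[OF lim]) (use h in \<open>auto intro!: exI[of _ 0]\<close>)
  then show ?thesis by simp
qed

lemma lebesgue_on_01_nontriv: "emeasure (lebesgue_on {0..1::real}) (space (lebesgue_on {0..1})) \<noteq> 0"
  by (simp add: emeasure_restrict_space)

lemma esssup_facts:
  fixes v :: "real \<Rightarrow> complex"
  assumes vm: "v \<in> borel_measurable (lebesgue_on {0..1})" and B: "AE x in lebesgue_on {0..1}. cmod (v x) \<le> B"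
  defines "Ni \<equiv> real_of_ereal (esssup (lebesgue_on {0..1}) (\<lambda>x. ereal (cmod (v x))))"
  shows "AE x in lebesgue_on {0..1}. cmod (v x) \<le> Ni" "Ni \<ge> 0"
proof -
  define E where "E = esssup (lebesgue_on {0..1}) (\<lambda>x. ereal (cmod (v x)))"
  have em: "(\<lambda>x. ereal (cmod (v x))) \<in> borel_measurable (lebesgue_on {0..1})" using vm by measurable
  have AE: "AE x in lebesgue_on {0..1}. ereal (cmod (v x)) \<le> E" unfolding E_def by (rule esssup_AE)
  have "E \<le> ereal B" unfolding E_def by (rule esssup_I[OF em]) (use B in auto)
  moreover have "E \<ge> 0"
  proof -
    have "esssup (lebesgue_on {0..1}) (\<lambda>x::real. 0::ereal) \<le> E"
      unfolding E_def by (rule esssup_mono) auto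
    then show ?thesis using esssup_const[OF lebesgue_on_01_nontriv, of "0::ereal"] by simp
  qed
  ultimately obtain r where r: "E = ereal r" "r \<ge> 0"
    by (cases E) auto
  have "Ni = r" unfolding Ni_def E_def[symmetric] r by simp
  then show "Ni \<ge> 0" using r by simp
  show "AE x in lebesgue_on {0..1}. cmod (v x) \<le> Ni"
    using AE unfolding \<open>Ni = r\<close> r by simp
qed

definition Kc :: "ereal \<Rightarrow> real \<Rightarrow> real" where
  "Kc p m = (if p = \<infinity> then (2 / m) * (pi / (2 * sqrt (m / 2)))
     else if real_of_ereal p = 2 then 2 / m
     else (2 powr (real_of_ereal p / (real_of_ereal p - 2)) * (pi / (2 * sqrt (m / 2))))
            powr (1 / (real_of_ereal p / (real_of_ereal p - 2))) / m)"

definition ex :: "ereal \<Rightarrow> real" where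
  "ex p = (if p = \<infinity> then 0 else 1 / (2 * real_of_ereal p)) + 1/4"

lemma Kc_pos: "m > 0 \<Longrightarrow> Kc p m > 0"
  unfolding Kc_def by simp

lemma Zbound:
  fixes v :: "real \<Rightarrow> complex" and w :: "real \<Rightarrow> real" and p :: ereal
  assumes p: "2 \<le> p" and L: "Linf_01 v"
    and wc: "continuous_on {0..1} w" and wl: "\<And>x. x \<in> {0..1} \<Longrightarrow> w x \<ge> (\<delta> + (m / 2) * x\<^sup>2) / 2"
    and d: "\<delta> > 0" and m: "m > 0"
  obtains v' Bv where "v' \<in> borel_measurable (lebesgue_on {0..1})" "\<And>x. x \<in> {0..1} \<Longrightarrow> cmod (v' x) \<le> Bv"
    "AE x in lebesgue_on {0..1}. v' x = v x"
    "integral {0..1} (\<lambda>x. (cmod (v' x))\<^sup>2 / (m * w x)) \<le> Kc p m * (Lp_norm p v)\<^sup>2 * \<delta> powr (- (2 * ex p))"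
proof -
  have k: "m / 2 > 0" using m by simp
  have vm: "v \<in> borel_measurable (lebesgue_on {0..1})" using L unfolding Linf_01_def by blast
  obtain B where B: "AE x in lebesgue_on {0..1}. cmod (v x) \<le> B" using L unfolding Linf_01_def by blast
  have trunc: "\<exists>v'. v' \<in> borel_measurable (lebesgue_on {0..1}) \<and> (\<forall>x. cmod (v' x) \<le> max B' 0)
      \<and> (AE x in lebesgue_on {0..1}. v' x = v x)" if B': "AE x in lebesgue_on {0..1}. cmod (v x) \<le> B'" for B'
  proof (intro exI conjI allI)
    let ?v = "\<lambda>x. if cmod (v x) \<le> B' then v x else 0"
    show "?v \<in> borel_measurable (lebesgue_on {0..1})" using vm by measurable
    show "cmod (?v x) \<le> max B' 0" for x by auto
    show "AE x in lebesgue_on {0..1}. ?v x = v x" using B' by eventually_elim auto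
  qed
  show ?thesis
  proof (cases "p = \<infinity>")
    case True
    define Ni where "Ni = real_of_ereal (esssup (lebesgue_on {0..1}) (\<lambda>x. ereal (cmod (v x))))"
    have Ni: "AE x in lebesgue_on {0..1}. cmod (v x) \<le> Ni" "Ni \<ge> 0"
      using esssup_facts[OF vm B] unfolding Ni_def by auto
    obtain v' where v': "v' \<in> borel_measurable (lebesgue_on {0..1})" "\<And>x. cmod (v' x) \<le> max Ni 0"
      "AE x in lebesgue_on {0..1}. v' x = v x" using trunc[OF Ni(1)] by blast
    have v'b: "cmod (v' x) \<le> Ni" for x using v'(2)[of x] Ni(2) by simp
    have Zb: "integral {0..1} (\<lambda>x. (cmod (v' x))\<^sup>2 / (m * w x)) \<le> Ni\<^sup>2 * ((2 / m) * (pi / (2 * sqrt (m / 2)))) * \<delta> powr (- (1/2))"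
      by (rule Z_inf[OF v'(1) v'b wc wl d k m])
    have "Lp_norm p v = Ni" unfolding Lp_norm_def Ni_def using True by simp
    moreover have "Kc p m = (2 / m) * (pi / (2 * sqrt (m / 2)))" unfolding Kc_def using True by simp
    moreover have "\<delta> powr (- (2 * ex p)) = \<delta> powr (- (1/2))" unfolding ex_def using True by simp
    ultimately have "Kc p m * (Lp_norm p v)\<^sup>2 * \<delta> powr (- (2 * ex p)) = Ni\<^sup>2 * ((2 / m) * (pi / (2 * sqrt (m / 2)))) * \<delta> powr (- (1/2))"
      by (simp only: mult.commute)
    then have "integral {0..1} (\<lambda>x. (cmod (v' x))\<^sup>2 / (m * w x)) \<le> Kc p m * (Lp_norm p v)\<^sup>2 * \<delta> powr (- (2 * ex p))"
      using Zb by linarith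
    then show ?thesis using that[of v' Ni] v'(1) v'b v'(3) by blast
  next
    case False
    then obtain pr where pr: "p = ereal pr" using p by (cases p) auto
    have pr2: "pr \<ge> 2" using p pr by simp
    have rp: "real_of_ereal p = pr" using pr by simp
    obtain v' where v': "v' \<in> borel_measurable (lebesgue_on {0..1})" "\<And>x. cmod (v' x) \<le> max B 0"
      "AE x in lebesgue_on {0..1}. v' x = v x" using trunc[OF B] by blast
    obtain N where N: "negligible N" "\<And>x. x \<in> {0..1} \<Longrightarrow> x \<notin> N \<Longrightarrow> v' x = v x"
      using AE_on_negligible[OF v'(3)] by auto
    define I where "I = integral {0..1} (\<lambda>x. cmod (v' x) powr pr)"
    have vi: "(\<lambda>x. cmod (v' x) powr pr) integrable_on {0..1}"
    proof -
      have vpm: "(\<lambda>x. cmod (v' x) powr pr) \<in> borel_measurable (lebesgue_on {0..1})"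
        using v'(1) by measurable
      have "(\<lambda>x. cmod (v' x) powr pr) absolutely_integrable_on {0..1}"
      proof (rule measurable_bounded_by_integrable_imp_absolutely_integrable[OF vpm, where g="\<lambda>x. (max B 0) powr pr"])
        show "(\<lambda>x::real. (max B 0) powr pr) integrable_on {0..1}" by (intro integrable_continuous_interval continuous_intros)
        fix x :: real assume x: "x \<in> {0..1}"
        show "norm (cmod (v' x) powr pr) \<le> (max B 0) powr pr"
          using v'(2)[of x] pr2 by (simp add: powr_mono2)
      qed simp
      then show ?thesis using set_lebesgue_integral_eq_integral(1) by blast
    qed
    have I0: "I \<ge> 0" unfolding I_def by (rule integral_nonneg[OF vi]) simp
    have Lp: "Lp_norm p v = I powr (1 / pr)"
    proof -
      have "integral {0..1} (\<lambda>x. cmod (v x) powr pr) = I"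
        unfolding I_def by (rule integral_spike[OF N(1)]) (use N(2) in auto)
      then show ?thesis unfolding Lp_norm_def using False rp by simp
    qed
    have v'b: "\<And>x. x \<in> {0..1} \<Longrightarrow> cmod (v' x) \<le> max B 0" using v'(2) by blast
    show ?thesis
    proof (cases "pr = 2")
      case True
      have wl2: "w x \<ge> \<delta> / 2" if "x \<in> {0..1}" for x
      proof -
        have "\<delta> / 2 \<le> (\<delta> + (m / 2) * x\<^sup>2) / 2" using m by simp
        then show ?thesis using wl[OF that] by linarith
      qed
      have Zb: "integral {0..1} (\<lambda>x. (cmod (v' x))\<^sup>2 / (m * w x)) \<le> (2 / m) * (1 / \<delta>) * integral {0..1} (\<lambda>x. (cmod (v' x))\<^sup>2)"
        by (rule Z_2[OF v'(1) v'b wc wl2 d m])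
      have "integral {0..1} (\<lambda>x. (cmod (v' x))\<^sup>2) = I"
        unfolding I_def True by (rule integral_cong) simp
      moreover have "(Lp_norm p v)\<^sup>2 = I" unfolding Lp True using I0 by (simp add: powr_half_sqrt)
      moreover have "Kc p m = 2 / m" unfolding Kc_def using False rp True by simp
      moreover have "\<delta> powr (- (2 * ex p)) = 1 / \<delta>" unfolding ex_def using False rp True d by (simp add: powr_minus_divide)
      ultimately have "Kc p m * (Lp_norm p v)\<^sup>2 * \<delta> powr (- (2 * ex p)) = (2 / m) * (1 / \<delta>) * integral {0..1} (\<lambda>x. (cmod (v' x))\<^sup>2)"
        by simp
      then have "integral {0..1} (\<lambda>x. (cmod (v' x))\<^sup>2 / (m * w x)) \<le> Kc p m * (Lp_norm p v)\<^sup>2 * \<delta> powr (- (2 * ex p))"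
        using Zb by linarith
      then show ?thesis using that[of v' "max B 0"] v'(1) v'b v'(3) by blast
    next
      case False2: False
      then have pr2': "pr > 2" using pr2 by simp
      define s where "s = pr / (pr - 2)"
      have s1: "s > 0" unfolding s_def using pr2' by simp
      define K0 where "K0 = 2 powr s * (pi / (2 * sqrt (m / 2)))"
      have K0: "K0 > 0" unfolding K0_def using m by simp
      have Kc: "Kc p m = K0 powr (1 / s) / m" unfolding Kc_def K0_def s_def using False False2 rp by simp
      have ex2: "(1/2 - s) * (1 / s) = - (2 * ex p)"
        unfolding ex_def s_def using False rp pr2' by (simp add: field_simps)
      have Lp0: "Lp_norm p v \<ge> 0" unfolding Lp by simp
      have "integral {0..1} (\<lambda>x. (cmod (v' x))\<^sup>2 / (m * w x)) \<le> (Lp_norm p v)\<^sup>2 * (Kc p m * \<delta> powr (- (2 * ex p)))"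
      proof (rule sq_limit[OF Lp0])
        show "0 \<le> Kc p m * \<delta> powr (- (2 * ex p))" using Kc_pos[OF m, of p] by simp
        fix N' assume N': "Lp_norm p v < N'"
        have N'0: "N' > 0" using N' Lp0 by simp
        have "I = (Lp_norm p v) powr pr" unfolding Lp using I0 pr2' by (simp add: powr_powr)
        also have "\<dots> \<le> N' powr pr" using N' Lp0 pr2' by (intro powr_mono2) auto
        finally have IN: "integral {0..1} (\<lambda>x. cmod (v' x) powr pr) \<le> N' powr pr" unfolding I_def .
        have "integral {0..1} (\<lambda>x. (cmod (v' x))\<^sup>2 / (m * w x)) \<le>
          N'\<^sup>2 * ((2 powr (pr / (pr - 2)) * (pi / (2 * sqrt (m / 2))) * \<delta> powr (1/2 - pr / (pr - 2))) powr (1 / (pr / (pr - 2)))) / m"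
          by (rule Z_p[OF v'(1) v'b wc wl d k m pr2' N'0 IN])
        also have "(2 powr (pr / (pr - 2)) * (pi / (2 * sqrt (m / 2))) * \<delta> powr (1/2 - pr / (pr - 2))) powr (1 / (pr / (pr - 2)))
            = K0 powr (1 / s) * \<delta> powr (- (2 * ex p))"
          unfolding K0_def[symmetric] s_def[symmetric] ex2[symmetric] using K0 d
          by (simp add: powr_mult powr_powr)
        finally show "integral {0..1} (\<lambda>x. (cmod (v' x))\<^sup>2 / (m * w x)) \<le> N'\<^sup>2 * (Kc p m * \<delta> powr (- (2 * ex p)))"
          unfolding Kc by (simp add: field_simps)
      qed
      then have "integral {0..1} (\<lambda>x. (cmod (v' x))\<^sup>2 / (m * w x)) \<le> Kc p m * (Lp_norm p v)\<^sup>2 * \<delta> powr (- (2 * ex p))"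
        by (simp add: mult.assoc mult.left_commute)
      then show ?thesis using that[of v' "max B 0"] v'(1) v'b v'(3) by blast
    qed
  qed
qed



lemma Lp_nonneg:
  assumes "Linf_01 v" shows "Lp_norm p v \<ge> 0"
proof (cases "p = \<infinity>")
  case True
  have vm: "v \<in> borel_measurable (lebesgue_on {0..1})" and "\<exists>B. AE x in lebesgue_on {0..1}. cmod (v x) \<le> B"
    using assms unfolding Linf_01_def by blast+
  then obtain B where "AE x in lebesgue_on {0..1}. cmod (v x) \<le> B" by blast
  from esssup_facts(2)[OF vm this] show ?thesis unfolding Lp_norm_def using True by simp
next
  case False then show ?thesis unfolding Lp_norm_def by simp
qed

theorem mainTheorem9:
  fixes p :: ereal and U U1 U2 U3 :: "real \<Rightarrow> real"
  assumes "2 \<le> p"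
    and "C3_on_01 U U1 U2 U3"
    and "U 1 = 0"
    and "(SUP x\<in>{0..1}. U2 x) < 0"
    and "U1 0 = 0"
    and "U1 1 = -1"
  shows "\<exists>\<mu>0>0. \<exists>C>0. \<forall>\<mu> \<nu> :: real. \<nu> > U 0 \<longrightarrow> \<bar>\<mu>\<bar> < \<mu>0 \<longrightarrow>
           (\<forall>alpha \<ge> 0. \<forall>phi phi1 phi2 v.
              dom_A phi phi1 phi2 \<and> Linf_01 v \<and> A_eq U U2 (Complex \<mu> \<nu>) alpha phi phi2 v \<longrightarrow>
              H1_norm phi phi1 \<le>
                C / ((\<bar>\<mu>\<bar> + \<bar>\<nu> - U 0\<bar>) powr
                      ((if p = \<infinity> then 0 else 1 / (2 * real_of_ereal p)) + 1/4))
                  * Lp_norm p v)"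
proof -
  obtain m where m: "m > 0" and U2m: "\<And>x. x \<in> {0..1} \<Longrightarrow> U2 x \<le> -m" and Uc: "continuous_on {0..1} U"
    and U2c: "continuous_on {0..1} U2" and Ub: "\<And>x. x \<in> {0..1} \<Longrightarrow> U x \<le> U 0 - m / 2 * x\<^sup>2"
    using U_facts[OF assms(2) assms(4) assms(5)] by blast
  define C where "C = sqrt (2 * Kc p m)"
  have Cp: "C > 0" unfolding C_def using Kc_pos[OF m, of p] by simp
  have main: "H1_norm phi phi1 \<le> C / ((\<bar>\<mu>\<bar> + \<bar>\<nu> - U 0\<bar>) powr ex p) * Lp_norm p v"
    if nu: "\<nu> > U 0" and alpha: "alpha \<ge> 0" and dom: "dom_A phi phi1 phi2" and L: "Linf_01 v"
      and eq: "A_eq U U2 (Complex \<mu> \<nu>) alpha phi phi2 v"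
    for \<mu> \<nu> alpha phi phi1 phi2 v
  proof -
    define a where "a = \<nu> - U 0"
    have a: "a > 0" unfolding a_def using nu by simp
    define \<delta> where "\<delta> = \<bar>\<mu>\<bar> + \<bar>\<nu> - U 0\<bar>"
    have \<delta>a: "\<delta> = \<bar>\<mu>\<bar> + a" unfolding \<delta>_def a_def using nu by simp
    have d: "\<delta> > 0" using \<delta>a a by simp
    have Ua: "a \<le> \<nu> - U x" if "x \<in> {0..1}" for x
      using Ub[OF that] m unfolding a_def by (smt (verit) mult_nonneg_nonneg zero_le_power2 divide_nonneg_pos)
    define w where "w x = cmod (complex_of_real (U x) + \<i> * Complex \<mu> \<nu>)" for x
    have wc: "continuous_on {0..1} w" unfolding w_def using Uc by (intro continuous_intros)
    have wl: "w x \<ge> (\<delta> + (m / 2) * x\<^sup>2) / 2" if x: "x \<in> {0..1}" for x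
    proof -
      have re: "\<bar>Re (complex_of_real (U x) + \<i> * Complex \<mu> \<nu>)\<bar> = \<nu> - U x"
        using Ua[OF x] a by simp
      have im: "\<bar>Im (complex_of_real (U x) + \<i> * Complex \<mu> \<nu>)\<bar> = \<bar>\<mu>\<bar>" by simp
      have w1: "w x \<ge> \<nu> - U x" unfolding w_def using abs_Re_le_cmod re by metis
      have w2: "w x \<ge> \<bar>\<mu>\<bar>" unfolding w_def using abs_Im_le_cmod im by metis
      have "\<nu> - U x \<ge> a + m / 2 * x\<^sup>2" using Ub[OF x] unfolding a_def by simp
      then show ?thesis using w1 w2 \<delta>a by simp
    qed
    obtain v' Bv where v'm: "v' \<in> borel_measurable (lebesgue_on {0..1})"
      and v'b: "\<And>x. x \<in> {0..1} \<Longrightarrow> cmod (v' x) \<le> Bv" and v'v: "AE x in lebesgue_on {0..1}. v' x = v x"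
      and Zb: "integral {0..1} (\<lambda>x. (cmod (v' x))\<^sup>2 / (m * w x)) \<le> Kc p m * (Lp_norm p v)\<^sup>2 * \<delta> powr (- (2 * ex p))"
      using Zbound[OF assms(1) L wc wl d m] by blast
    have eq': "A_eq U U2 (Complex \<mu> \<nu>) alpha phi phi2 v'"
      using eq v'v unfolding A_eq_def by eventually_elim simp
    have X: "integral {0..1} (\<lambda>x. (cmod (phi1 x))\<^sup>2) \<le> integral {0..1} (\<lambda>x. (cmod (v' x))\<^sup>2 / (m * w x))"
      using key_energy[OF dom eq' v'm v'b Uc U2c m U2m a Ua alpha] unfolding w_def .
    have T: "integral {0..1} (\<lambda>x. (cmod (phi x))\<^sup>2 + (cmod (phi1 x))\<^sup>2) \<le> 2 * (Kc p m * (Lp_norm p v)\<^sup>2 * \<delta> powr (- (2 * ex p)))"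
      using poincare[OF dom] X Zb by linarith
    have L0: "Lp_norm p v \<ge> 0" by (rule Lp_nonneg[OF L])
    have pw: "\<delta> powr (- (2 * ex p)) = (1 / \<delta> powr ex p)\<^sup>2"
      using d by (simp add: power2_eq_square powr_add[symmetric] powr_minus_divide[symmetric])
    have "H1_norm phi phi1 \<le> sqrt (2 * (Kc p m * (Lp_norm p v)\<^sup>2 * \<delta> powr (- (2 * ex p))))"
      unfolding H1_norm_def using T by (rule real_sqrt_le_mono)
    also have "\<dots> = sqrt (2 * Kc p m) * Lp_norm p v * (1 / \<delta> powr ex p)"
      unfolding pw using L0 d by (simp add: real_sqrt_mult mult_ac)
    also have "\<dots> = C / (\<delta> powr ex p) * Lp_norm p v" unfolding C_def by simp
    finally show ?thesis unfolding \<delta>_def .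
  qed
  show ?thesis
    by (rule exI[of _ "1::real"], intro conjI, simp, rule exI[of _ C], intro conjI Cp allI impI)
       (use main in \<open>auto simp: ex_def\<close>)
qed


end
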